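(* There exists an online Fisher market instance (a number of goods $m$, a per-user capacity vector $\mathbf{d}>\mathbf{0}$ with capacities $\mathbf{c}=n\mathbf{d}$, and a distribution $\mathcal{D}$ of budget–utility pairs) such that, for every static pricing algorithm $\boldsymbol{\pi}$ (i.e., one that posts the same price vector $\mathbf{p}^t=\mathbf{p}$ to all users $t\in[n]$), either the expected regret $R_n(\boldsymbol{\pi})$ or the expected constraint violation $V_n(\boldsymbol{\pi})$ is $\Omega(\sqrt{n})$, where $n$ is the number of arriving users.
   Context: Online Fisher market: there are $m$ divisible goods, good $j$ having capacity $c_j=nd_j$ with $d_j>0$, and $n$ users arriving sequentially. User $t$ has a budget $w_t>0$ and a utility vector $\mathbf{u}_t\in\mathbb{R}^m_{\ge 0}$, and the pairs $(w_t,\mathbf{u}_t)$ are drawn i.i.d. from a distribution $\mathcal{D}$ with bounded support. Given a posted price vector $\mathbf{p}^t$, user $t$ consumes a bundle $\mathbf{x}_t$ that is an optimal solution of $\max_{\mathbf{x}\in\mathbb{R}^m}\ \mathbf{u}_t^\top\mathbf{x}$ subject to $(\mathbf{p}^t)^\top\mathbf{x}\le w_t$, $\mathbf{x}\ge\mathbf{0}$. A pricing policy $\boldsymbol{\pi}$ chooses $\mathbf{p}^t$ for each user. The offline optimum is $U_n^*=\max\{\sum_{t=1}^n w_t\log(\sum_{j}u_{tj}x_{tj}) : \sum_{t}x_{tj}\le c_j\ \forall j,\ x_{tj}\ge 0\}$ (Eisenberg–Gale program), the online objective is $U_n(\boldsymbol{\pi})=\sum_{t=1}^n w_t\log(\mathbf{u}_t^\top\mathbf{x}_t)$,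 the expected regret is $R_n(\boldsymbol{\pi})=\mathbb{E}[U_n^*-U_n(\boldsymbol{\pi})]$ and the expected constraint violation is $V_n(\boldsymbol{\pi})=\mathbb{E}[\|(\sum_{t=1}^n\mathbf{x}_t-\mathbf{c})_+\|_2]$, expectations over $\mathcal{D}$. Asymptotic notation refers to $n\to\infty$ with the instance parameters $m,\mathbf{d},\mathcal{D}$ fixed. *)

theory Defs
  imports "HOL-Probability.Probability" "HOL-Library.Landau_Symbols"
begin

text \<open>Vectors in R^m are represented as functions nat => real; only the
  components j < m are meaningful.\<close>

definition dotp :: "nat \<Rightarrow> (nat \<Rightarrow> real) \<Rightarrow> (nat \<Rightarrow> real) \<Rightarrow> real" where
  "dotp m a b = (\<Sum>j<m. a j * b j)"

definition affordable :: "nat \<Rightarrow> (nat \<Rightarrow> real) \<Rightarrow> real \<Rightarrow> (nat \<Rightarrow> real) \<Rightarrow> bool" where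
  "affordable m p w x \<longleftrightarrow> (\<forall>j<m. x j \<ge> 0) \<and> dotp m p x \<le> w"

definition user_optimal ::
  "nat \<Rightarrow> (nat \<Rightarrow> real) \<Rightarrow> real \<Rightarrow> (nat \<Rightarrow> real) \<Rightarrow> (nat \<Rightarrow> real) \<Rightarrow> bool" where
  "user_optimal m p w u x \<longleftrightarrow>
     affordable m p w x \<and> (\<forall>y. affordable m p w y \<longrightarrow> dotp m u y \<le> dotp m u x)"

definition valid_instance :: "nat \<Rightarrow> (nat \<Rightarrow> real) \<Rightarrow> (real \<times> (nat \<Rightarrow> real)) pmf \<Rightarrow> bool" where
  "valid_instance m d D \<longleftrightarrow> m \<ge> 1 \<and> (\<forall>j<m. d j > 0) \<and> finite (set_pmf D) \<and>
     (\<forall>(w, u) \<in> set_pmf D. w > 0 \<and> (\<forall>j<m. u j \<ge> 0) \<and> (\<exists>j<m. u j > 0))"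

text \<open>A user response (tie-breaking) rule: maps (p, w, u) to a bundle, which must be
  an optimal bundle whenever an optimal bundle exists.\<close>
definition valid_response ::
  "nat \<Rightarrow> ((nat \<Rightarrow> real) \<Rightarrow> real \<Rightarrow> (nat \<Rightarrow> real) \<Rightarrow> (nat \<Rightarrow> real)) \<Rightarrow> bool" where
  "valid_response m sel \<longleftrightarrow>
     (\<forall>p w u. (\<exists>x. user_optimal m p w u x) \<longrightarrow> user_optimal m p w u (sel p w u))"

text \<open>A price vector p >= 0 for which every user type in the support has an optimal bundle
  (so that the users' behaviour is well defined).\<close>
definition admissible_price :: "nat \<Rightarrow> (real \<times> (nat \<Rightarrow> real)) pmf \<Rightarrow> (nat \<Rightarrow> real) \<Rightarrow> bool" where
  "admissible_price m D p \<longleftrightarrow> (\<forall>j<m. p j \<ge> 0) \<and>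
     (\<forall>(w, u) \<in> set_pmf D. \<exists>x. user_optimal m p w u x)"

definition arrivals :: "nat \<Rightarrow> (real \<times> (nat \<Rightarrow> real)) pmf \<Rightarrow> (nat \<Rightarrow> real \<times> (nat \<Rightarrow> real)) pmf" where
  "arrivals n D = Pi_pmf {..<n} undefined (\<lambda>_. D)"

text \<open>Offline optimum of the Eisenberg-Gale program with capacities c
  (allocations with zero utility for some user have objective -infinity and are excluded).\<close>
definition offline_opt ::
  "nat \<Rightarrow> (nat \<Rightarrow> real) \<Rightarrow> nat \<Rightarrow> (nat \<Rightarrow> real \<times> (nat \<Rightarrow> real)) \<Rightarrow> real" where
  "offline_opt m c n \<omega> = Sup {\<Sum>t<n. fst (\<omega> t) * ln (dotp m (snd (\<omega> t)) (X t)) | X.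
       (\<forall>t<n. \<forall>j<m. X t j \<ge> 0) \<and> (\<forall>j<m. (\<Sum>t<n. X t j) \<le> c j) \<and>
       (\<forall>t<n. dotp m (snd (\<omega> t)) (X t) > 0)}"

definition consumed ::
  "((nat \<Rightarrow> real) \<Rightarrow> real \<Rightarrow> (nat \<Rightarrow> real) \<Rightarrow> (nat \<Rightarrow> real)) \<Rightarrow> (nat \<Rightarrow> real) \<Rightarrow>
   (nat \<Rightarrow> real \<times> (nat \<Rightarrow> real)) \<Rightarrow> nat \<Rightarrow> (nat \<Rightarrow> real)" where
  "consumed sel p \<omega> t = sel p (fst (\<omega> t)) (snd (\<omega> t))"

definition online_obj ::
  "nat \<Rightarrow> nat \<Rightarrow> ((nat \<Rightarrow> real) \<Rightarrow> real \<Rightarrow> (nat \<Rightarrow> real) \<Rightarrow> (nat \<Rightarrow> real)) \<Rightarrow> (nat \<Rightarrow> real) \<Rightarrow>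
   (nat \<Rightarrow> real \<times> (nat \<Rightarrow> real)) \<Rightarrow> real" where
  "online_obj m n sel p \<omega> = (\<Sum>t<n. fst (\<omega> t) * ln (dotp m (snd (\<omega> t)) (consumed sel p \<omega> t)))"

definition regret ::
  "nat \<Rightarrow> (nat \<Rightarrow> real) \<Rightarrow> (real \<times> (nat \<Rightarrow> real)) pmf \<Rightarrow> nat \<Rightarrow>
   ((nat \<Rightarrow> real) \<Rightarrow> real \<Rightarrow> (nat \<Rightarrow> real) \<Rightarrow> (nat \<Rightarrow> real)) \<Rightarrow> (nat \<Rightarrow> real) \<Rightarrow> real" where
  "regret m d D n sel p = measure_pmf.expectation (arrivals n D)
     (\<lambda>\<omega>. offline_opt m (\<lambda>j. real n * d j) n \<omega> - online_obj m n sel p \<omega>)"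

definition violation ::
  "nat \<Rightarrow> (nat \<Rightarrow> real) \<Rightarrow> (real \<times> (nat \<Rightarrow> real)) pmf \<Rightarrow> nat \<Rightarrow>
   ((nat \<Rightarrow> real) \<Rightarrow> real \<Rightarrow> (nat \<Rightarrow> real) \<Rightarrow> (nat \<Rightarrow> real)) \<Rightarrow> (nat \<Rightarrow> real) \<Rightarrow> real" where
  "violation m d D n sel p = measure_pmf.expectation (arrivals n D)
     (\<lambda>\<omega>. sqrt (\<Sum>j<m. (max 0 ((\<Sum>t<n. consumed sel p \<omega> t j) - real n * d j))\<^sup>2))"

end

theory Submission
  imports Defs
begin


definition o1 :: "nat \<Rightarrow> real" where "o1 = (\<lambda>_. 1)"
definition SD :: "(real \<times> (nat \<Rightarrow> real)) set" where "SD = {(1, o1), (3, o1)}"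
definition D0 :: "(real \<times> (nat \<Rightarrow> real)) pmf" where "D0 = pmf_of_set SD"
definition Ssum :: "nat \<Rightarrow> (nat \<Rightarrow> real \<times> (nat \<Rightarrow> real)) \<Rightarrow> real" where
  "Ssum n \<omega> = (\<Sum>t<n. fst (\<omega> t))"

lemma SD_fin: "finite SD" "SD \<noteq> {}" by (auto simp: SD_def)
lemma set_D0: "set_pmf D0 = SD" by (simp add: D0_def SD_fin)
lemma card_SD: "card SD = 2" by (simp add: SD_def)

lemma set_arr: "\<omega> \<in> set_pmf (arrivals n D0) \<Longrightarrow> t < n \<Longrightarrow> \<omega> t \<in> SD"
  using set_Pi_pmf_subset'[of "{..<n}" undefined "\<lambda>_. D0"]
  by (auto simp: arrivals_def PiE_dflt_def set_D0)

lemma fin_arr: "finite (set_pmf (arrivals n D0))"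
proof -
  have "set_pmf (arrivals n D0) \<subseteq> PiE_dflt {..<n} undefined (set_pmf \<circ> (\<lambda>_. D0))"
    unfolding arrivals_def by (rule set_Pi_pmf_subset') simp
  moreover have "finite (PiE_dflt {..<n} undefined (set_pmf \<circ> (\<lambda>_. D0)))"
    by (rule finite_PiE_dflt) (auto simp: set_D0 SD_fin)
  ultimately show ?thesis by (rule finite_subset)
qed

lemma E_mono:
  fixes f g :: "'a \<Rightarrow> real"
  assumes "finite (set_pmf p)" "\<And>x. x \<in> set_pmf p \<Longrightarrow> f x \<le> g x"
  shows "measure_pmf.expectation p f \<le> measure_pmf.expectation p g"
  using assms by (intro integral_mono_AE integrable_measure_pmf_finite AE_pmfI) auto

lemma E_lin:
  fixes f g :: "'a \<Rightarrow> real"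
  assumes "finite (set_pmf p)"
  shows "measure_pmf.expectation p (\<lambda>x. a * f x + b * g x + c) =
     a * measure_pmf.expectation p f + b * measure_pmf.expectation p g + c"
  using assms by (simp add: integrable_measure_pmf_finite)

lemma E_pair:
  fixes F :: "'a \<times> 'b \<Rightarrow> real"
  assumes A: "finite (set_pmf A)" and B: "finite (set_pmf B)"
  shows "measure_pmf.expectation (pair_pmf A B) F =
    measure_pmf.expectation A (\<lambda>a. measure_pmf.expectation B (\<lambda>b. F (a, b)))"
proof -
  have "measure_pmf.expectation (pair_pmf A B) F =
     (\<Sum>x\<in>set_pmf A \<times> set_pmf B. pmf (pair_pmf A B) x *\<^sub>R F x)"
    by (rule integral_measure_pmf) (use A B in auto)
  also have "\<dots> = (\<Sum>a\<in>set_pmf A. \<Sum>b\<in>set_pmf B. pmf A a * (pmf B b * F (a, b)))"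
    by (subst sum.cartesian_product) (auto intro!: sum.cong simp: pmf_pair mult.assoc)
  also have "\<dots> = (\<Sum>a\<in>set_pmf A. pmf A a *\<^sub>R (\<Sum>b\<in>set_pmf B. pmf B b *\<^sub>R F (a, b)))"
    by (simp add: sum_distrib_left)
  also have "\<dots> = measure_pmf.expectation A (\<lambda>a. measure_pmf.expectation B (\<lambda>b. F (a, b)))"
  proof -
    have 1: "measure_pmf.expectation B (\<lambda>b. F (a, b)) = (\<Sum>b\<in>set_pmf B. pmf B b *\<^sub>R F (a, b))" for a
      by (rule integral_measure_pmf[OF B]) auto
    have 2: "measure_pmf.expectation A (\<lambda>a. measure_pmf.expectation B (\<lambda>b. F (a, b))) =
       (\<Sum>a\<in>set_pmf A. pmf A a *\<^sub>R measure_pmf.expectation B (\<lambda>b. F (a, b)))"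
      by (rule integral_measure_pmf[OF A]) auto
    show ?thesis by (subst 2) (simp only: 1)
  qed
  finally show ?thesis .
qed

lemma E_rec:
  fixes h :: "real \<Rightarrow> real"
  shows "measure_pmf.expectation (arrivals (Suc n) D0) (\<lambda>\<omega>. h (Ssum (Suc n) \<omega>)) =
    (measure_pmf.expectation (arrivals n D0) (\<lambda>\<omega>. h (Ssum n \<omega> + 1)) +
     measure_pmf.expectation (arrivals n D0) (\<lambda>\<omega>. h (Ssum n \<omega> + 3))) / 2"
proof -
  have eq: "arrivals (Suc n) D0 = map_pmf (\<lambda>(y,f). f(n:=y)) (pair_pmf D0 (arrivals n D0))"
    unfolding arrivals_def lessThan_Suc by (rule Pi_pmf_insert) auto
  have S: "Ssum (Suc n) (f(n:=y)) = fst y + Ssum n f" for f y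
  proof -
    have "(\<Sum>t<n. fst ((f(n:=y)) t)) = (\<Sum>t<n. fst (f t))" by (rule sum.cong) auto
    then show ?thesis by (simp add: Ssum_def)
  qed
  have "measure_pmf.expectation (arrivals (Suc n) D0) (\<lambda>\<omega>. h (Ssum (Suc n) \<omega>)) =
     measure_pmf.expectation (pair_pmf D0 (arrivals n D0)) (\<lambda>x. h (Ssum (Suc n) ((\<lambda>(y,f). f(n:=y)) x)))"
    by (simp add: eq)
  also have "\<dots> = measure_pmf.expectation D0 (\<lambda>y. measure_pmf.expectation (arrivals n D0)
      (\<lambda>f. h (fst y + Ssum n f)))"
    by (subst E_pair) (auto simp: set_D0 SD_fin fin_arr S)
  also have "\<dots> = (measure_pmf.expectation (arrivals n D0) (\<lambda>\<omega>. h (Ssum n \<omega> + 1)) +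
     measure_pmf.expectation (arrivals n D0) (\<lambda>\<omega>. h (Ssum n \<omega> + 3))) / 2"
    unfolding D0_def by (subst integral_pmf_of_set) (auto simp: SD_fin card_SD, simp add: SD_def add.commute)
  finally show ?thesis .
qed

lemma Eint: "integrable (measure_pmf (arrivals n D0)) (f :: _ \<Rightarrow> real)"
  by (rule integrable_measure_pmf_finite[OF fin_arr])

lemma M1: "measure_pmf.expectation (arrivals n D0) (Ssum n) = 2 * real n"
proof (induction n)
  case 0 then show ?case by (simp add: Ssum_def)
next
  case (Suc n)
  have "measure_pmf.expectation (arrivals (Suc n) D0) (\<lambda>\<omega>. Ssum (Suc n) \<omega>) =
    (measure_pmf.expectation (arrivals n D0) (\<lambda>\<omega>. Ssum n \<omega> + 1) +
     measure_pmf.expectation (arrivals n D0) (\<lambda>\<omega>. Ssum n \<omega> + 3)) / 2"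
    by (rule E_rec)
  also have "\<dots> = 2 * real (Suc n)" using Suc by (simp add: Eint)
  finally show ?case by simp
qed

lemma M2: "measure_pmf.expectation (arrivals n D0) (\<lambda>\<omega>. (Ssum n \<omega>)^2) = 4 * real n ^ 2 + real n"
proof (induction n)
  case 0 then show ?case by (simp add: Ssum_def)
next
  case (Suc n)
  have "measure_pmf.expectation (arrivals (Suc n) D0) (\<lambda>\<omega>. (Ssum (Suc n) \<omega>)^2) =
    (measure_pmf.expectation (arrivals n D0) (\<lambda>\<omega>. (Ssum n \<omega> + 1)^2) +
     measure_pmf.expectation (arrivals n D0) (\<lambda>\<omega>. (Ssum n \<omega> + 3)^2)) / 2"
    by (rule E_rec)
  also have "\<dots> = measure_pmf.expectation (arrivals n D0) (\<lambda>\<omega>. 1 * (Ssum n \<omega>)^2 + 4 * Ssum n \<omega> + 5)"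
    by (simp add: Eint power2_eq_square algebra_simps)
  also have "\<dots> = 4 * real (Suc n) ^ 2 + real (Suc n)"
    by (subst E_lin[OF fin_arr]) (simp add: Suc[unfolded power2_eq_square] M1 power2_eq_square algebra_simps)
  finally show ?case by simp
qed

definition Zv :: "nat \<Rightarrow> (nat \<Rightarrow> real \<times> (nat \<Rightarrow> real)) \<Rightarrow> real" where
  "Zv n \<omega> = Ssum n \<omega> - 2 * real n"

lemma Z1: "measure_pmf.expectation (arrivals n D0) (Zv n) = 0"
proof -
  have "Zv n = (\<lambda>\<omega>. Ssum n \<omega> - 2 * real n)" by (rule ext) (simp add: Zv_def)
  then show ?thesis using M1[of n] by (simp add: Eint)
qed

lemma Z2: "measure_pmf.expectation (arrivals n D0) (\<lambda>\<omega>. (Zv n \<omega>)^2) = real n"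
proof -
  have "measure_pmf.expectation (arrivals n D0) (\<lambda>\<omega>. (Zv n \<omega>)^2) =
     measure_pmf.expectation (arrivals n D0) (\<lambda>\<omega>. 1 * (Ssum n \<omega>)^2 + (- 4 * real n) * Ssum n \<omega> + 4 * real n ^ 2)"
    by (simp add: Zv_def power2_eq_square algebra_simps)
  also have "\<dots> = real n" by (subst E_lin[OF fin_arr]) (simp add: M1 M2[unfolded power2_eq_square] power2_eq_square algebra_simps)
  finally show ?thesis .
qed

lemma Z4: "measure_pmf.expectation (arrivals n D0) (\<lambda>\<omega>. (Zv n \<omega>)^4) = 3 * real n ^ 2 - 2 * real n"
proof (induction n)
  case 0 then show ?case by (simp add: Ssum_def Zv_def)
next
  case (Suc n)
  have "measure_pmf.expectation (arrivals (Suc n) D0) (\<lambda>\<omega>. (Zv (Suc n) \<omega>)^4) =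
     measure_pmf.expectation (arrivals (Suc n) D0) (\<lambda>\<omega>. (Ssum (Suc n) \<omega> - 2 * real (Suc n))^4)"
    by (simp add: Zv_def)
  also have "\<dots> =
    (measure_pmf.expectation (arrivals n D0) (\<lambda>\<omega>. (Ssum n \<omega> + 1 - 2 * real (Suc n))^4) +
     measure_pmf.expectation (arrivals n D0) (\<lambda>\<omega>. (Ssum n \<omega> + 3 - 2 * real (Suc n))^4)) / 2"
    by (rule E_rec)
  also have "\<dots> = (measure_pmf.expectation (arrivals n D0) (\<lambda>\<omega>. (Zv n \<omega> - 1)^4) +
     measure_pmf.expectation (arrivals n D0) (\<lambda>\<omega>. (Zv n \<omega> + 1)^4)) / 2"
    by (simp add: Zv_def algebra_simps)
  also have "\<dots> = measure_pmf.expectation (arrivals n D0) (\<lambda>\<omega>. 1 * (Zv n \<omega>)^4 + 6 * (Zv n \<omega>)^2 + 1)"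
    proof -
      have "(measure_pmf.expectation (arrivals n D0) (\<lambda>\<omega>. (Zv n \<omega> - 1)^4) +
     measure_pmf.expectation (arrivals n D0) (\<lambda>\<omega>. (Zv n \<omega> + 1)^4)) / 2 =
        measure_pmf.expectation (arrivals n D0) (\<lambda>\<omega>. ((Zv n \<omega> - 1)^4 + (Zv n \<omega> + 1)^4) / 2)"
        by (simp add: Eint)
      also have "\<dots> = measure_pmf.expectation (arrivals n D0) (\<lambda>\<omega>. 1 * (Zv n \<omega>)^4 + 6 * (Zv n \<omega>)^2 + 1)"
        by (rule arg_cong[where f="measure_pmf.expectation (arrivals n D0)"])
           (simp add: fun_eq_iff power4_eq_xxxx power2_eq_square algebra_simps)
      finally show ?thesis .
    qed
  also have "\<dots> = 3 * real (Suc n) ^ 2 - 2 * real (Suc n)"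
    by (subst E_lin[OF fin_arr]) (simp add: Suc Z2[unfolded power2_eq_square] power2_eq_square algebra_simps)
  finally show ?case .
qed

lemma pt_abs: fixes z t :: real assumes "t > 0" shows "z^2 \<le> t * \<bar>z\<bar> + z^4 / t^2"
proof (cases "\<bar>z\<bar> \<le> t")
  case True
  have "\<bar>z\<bar> * \<bar>z\<bar> \<le> t * \<bar>z\<bar>" by (rule mult_right_mono[OF True]) simp
  then have "z^2 \<le> t * \<bar>z\<bar>" by (simp add: power2_eq_square)
  moreover have "z^4 / t^2 \<ge> 0" by simp
  ultimately show ?thesis by linarith
next
  case False
  then have tz: "t \<le> \<bar>z\<bar>" by simp
  have "t * t \<le> \<bar>z\<bar> * \<bar>z\<bar>" by (rule mult_mono[OF tz tz]) (use assms in auto)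
  then have "t^2 \<le> z^2" by (simp add: power2_eq_square)
  then have "z^2 * t^2 \<le> z^2 * z^2" by (rule mult_left_mono) simp
  moreover have "t^2 > 0" using assms by simp
  ultimately have "z^2 \<le> (z^2 * z^2) / t^2" by (simp add: le_divide_eq)
  moreover have "z^2 * z^2 = z^4" by (simp add: power4_eq_xxxx power2_eq_square)
  moreover have "t * \<bar>z\<bar> \<ge> 0" using assms by simp
  ultimately show ?thesis by simp
qed

lemma Eabs: assumes "n \<ge> 1"
  shows "measure_pmf.expectation (arrivals n D0) (\<lambda>\<omega>. \<bar>Zv n \<omega>\<bar>) \<ge> 2 * sqrt (real n) / 9"
proof -
  define t where "t = 3 * sqrt (real n)"
  define A where "A = measure_pmf.expectation (arrivals n D0) (\<lambda>\<omega>. \<bar>Zv n \<omega>\<bar>)"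
  have sn: "sqrt (real n) > 0" using assms by simp
  have t: "t > 0" using sn by (simp add: t_def)
  have t2: "t^2 = 9 * real n" by (simp add: t_def power_mult_distrib)
  have "real n = measure_pmf.expectation (arrivals n D0) (\<lambda>\<omega>. (Zv n \<omega>)^2)" by (simp add: Z2)
  also have "\<dots> \<le> measure_pmf.expectation (arrivals n D0) (\<lambda>\<omega>. t * \<bar>Zv n \<omega>\<bar> + (1/t^2) * (Zv n \<omega>)^4 + 0)"
    using pt_abs[OF t] by (intro E_mono[OF fin_arr]) simp
  also have "\<dots> = t * A + (1/t^2) * (3 * real n ^ 2 - 2 * real n)"
    by (subst E_lin[OF fin_arr]) (simp add: Z4 A_def)
  also have "\<dots> = t * A + (3 * real n - 2) / 9"
    unfolding t2 using assms by (simp add: power2_eq_square divide_simps) (simp add: algebra_simps)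
  also have "\<dots> \<le> t * A + real n / 3" by simp
  finally have "2 * real n / 3 \<le> t * A" by simp
  moreover have "sqrt (real n) * (2 * sqrt (real n) / 3) = 2 * real n / 3" by simp
  moreover have "sqrt (real n) * (3 * A) = t * A" by (simp add: t_def)
  ultimately have "sqrt (real n) * (2 * sqrt (real n) / 3) \<le> sqrt (real n) * (3 * A)" by linarith
  then have "2 * sqrt (real n) / 3 \<le> 3 * A" using sn mult_le_cancel_left_pos by blast
  then show ?thesis by (simp add: A_def)
qed

lemma Epos: assumes "n \<ge> 1"
  shows "measure_pmf.expectation (arrivals n D0) (\<lambda>\<omega>. max (Zv n \<omega>) 0) \<ge> sqrt (real n) / 9"
proof -
  have "measure_pmf.expectation (arrivals n D0) (\<lambda>\<omega>. max (Zv n \<omega>) 0) =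
     measure_pmf.expectation (arrivals n D0) (\<lambda>\<omega>. (1/2) * \<bar>Zv n \<omega>\<bar> + (1/2) * Zv n \<omega> + 0)"
  proof -
    have eq: "(\<lambda>\<omega>. max (Zv n \<omega>) 0) = (\<lambda>\<omega>. (1/2) * \<bar>Zv n \<omega>\<bar> + (1/2) * Zv n \<omega> + 0)"
      by (rule ext) arith
    show ?thesis by (simp only: eq)
  qed
  also have "\<dots> = (1/2) * measure_pmf.expectation (arrivals n D0) (\<lambda>\<omega>. \<bar>Zv n \<omega>\<bar>)"
    by (subst E_lin[OF fin_arr]) (use Z1[of n] in simp)
  finally show ?thesis using Eabs[OF assms] by linarith
qed



lemma dotp1[simp]: "dotp 1 a b = a 0 * b 0" by (simp add: dotp_def)
lemma dotp1'[simp]: "dotp (Suc 0) a b = a 0 * b 0" by (simp add: dotp_def)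

lemma valid0: "valid_instance 1 (\<lambda>_. 2) D0"
  by (simp add: valid_instance_def set_D0 SD_fin SD_def o1_def)

lemma adm_pos: assumes "admissible_price 1 D0 p" shows "p 0 > 0"
proof (rule ccontr)
  assume "\<not> p 0 > 0"
  moreover have "p 0 \<ge> 0" using assms by (simp add: admissible_price_def)
  ultimately have p0: "p 0 = 0" by simp
  have "(1, o1) \<in> set_pmf D0" by (simp add: set_D0 SD_def)
  then obtain x where x: "user_optimal 1 p 1 o1 x" using assms unfolding admissible_price_def by fastforce
  define y where "y = (\<lambda>j::nat. x j + 1)"
  have "affordable 1 p 1 y" using x p0 by (simp add: user_optimal_def affordable_def y_def)
  then have "dotp 1 o1 y \<le> dotp 1 o1 x" using x by (simp add: user_optimal_def)
  then show False by (simp add: y_def o1_def)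
qed

lemma resp: assumes "valid_response 1 sel" "p 0 > 0" "w > 0"
  shows "sel p w o1 0 = w / p 0"
proof -
  have opt: "user_optimal 1 p w o1 (\<lambda>_. w / p 0)"
    using assms(2,3) by (auto simp: user_optimal_def affordable_def o1_def field_simps)
  then have x: "user_optimal 1 p w o1 (sel p w o1)" using assms(1) unfolding valid_response_def by blast
  have "affordable 1 p w (\<lambda>_. w / p 0)" using opt by (simp add: user_optimal_def)
  moreover have "\<forall>y. affordable 1 p w y \<longrightarrow> dotp 1 o1 y \<le> dotp 1 o1 (sel p w o1)"
    using x by (simp add: user_optimal_def)
  ultimately have "dotp 1 o1 (\<lambda>_. w / p 0) \<le> dotp 1 o1 (sel p w o1)" by blast
  then have "w / p 0 \<le> sel p w o1 0" by (simp add: o1_def)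
  moreover have "p 0 * sel p w o1 0 \<le> w" using x by (simp add: user_optimal_def affordable_def)
  then have "sel p w o1 0 \<le> w / p 0" using assms(2) by (simp add: field_simps)
  ultimately show ?thesis by simp
qed

lemma Spos: assumes "\<forall>t<n. \<omega> t \<in> SD" "n \<ge> 1" shows "Ssum n \<omega> \<ge> real n"
proof -
  have "(\<Sum>t<n. (1::real)) \<le> (\<Sum>t<n. fst (\<omega> t))"
    by (rule sum_mono) (use assms in \<open>auto simp: SD_def\<close>)
  then show ?thesis by (simp add: Ssum_def)
qed

lemma offline_lb:
  assumes sd: "\<forall>t<n. \<omega> t \<in> SD" and n: "n \<ge> 1"
  shows "offline_opt 1 (\<lambda>j. real n * 2) n \<omega> \<ge>
     (\<Sum>t<n. fst (\<omega> t) * ln (2 * real n * fst (\<omega> t) / Ssum n \<omega>))"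
proof -
  let ?S = "Ssum n \<omega>"
  have Sp: "?S > 0" using Spos[OF sd n] n by linarith
  have w: "fst (\<omega> t) \<ge> 1" "snd (\<omega> t) = o1" if "t < n" for t
    using sd that by (auto simp: SD_def)
  define X where "X = (\<lambda>t (j::nat). 2 * real n * fst (\<omega> t) / ?S)"
  let ?Set = "{\<Sum>t<n. fst (\<omega> t) * ln (dotp 1 (snd (\<omega> t)) (X t)) | X.
       (\<forall>t<n. \<forall>j<1. X t j \<ge> 0) \<and> (\<forall>j<1. (\<Sum>t<n. X t j) \<le> real n * 2) \<and>
       (\<forall>t<n. dotp 1 (snd (\<omega> t)) (X t) > 0)}"
  have mem: "(\<Sum>t<n. fst (\<omega> t) * ln (2 * real n * fst (\<omega> t) / ?S)) \<in> ?Set"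
  proof -
    have "(\<Sum>t<n. X t 0) = 2 * real n * (\<Sum>t<n. fst (\<omega> t)) / ?S"
      by (simp add: X_def sum_divide_distrib[symmetric] sum_distrib_left)
    also have "\<dots> = real n * 2" using Sp by (simp add: Ssum_def)
    finally have s: "(\<Sum>t<n. X t 0) = real n * 2" .
    have "(\<forall>t<n. \<forall>j<1. X t j \<ge> 0) \<and> (\<forall>j<1. (\<Sum>t<n. X t j) \<le> real n * 2) \<and>
       (\<forall>t<n. dotp 1 (snd (\<omega> t)) (X t) > 0)"
    proof -
      have "X t j > 0" if "t < n" for t j
      proof -
        have "fst (\<omega> t) > 0" using w(1)[OF that] by simp
        moreover have "real n > 0" using n by simp
        ultimately show ?thesis unfolding X_def using Sp by simp
      qed
      then show ?thesis using s w(2) by (auto simp: o1_def less_imp_le)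
    qed
    moreover have "(\<Sum>t<n. fst (\<omega> t) * ln (2 * real n * fst (\<omega> t) / ?S)) =
       (\<Sum>t<n. fst (\<omega> t) * ln (dotp 1 (snd (\<omega> t)) (X t)))"
      by (rule sum.cong) (auto simp: w X_def o1_def)
    ultimately show ?thesis by blast
  qed
  have bdd: "bdd_above ?Set"
  proof (rule bdd_aboveI)
    fix v assume "v \<in> ?Set"
    then obtain Y where Y: "\<forall>t<n. \<forall>j<1. Y t j \<ge> 0" "\<forall>j<1. (\<Sum>t<n. Y t j) \<le> real n * 2"
      "\<forall>t<n. dotp 1 (snd (\<omega> t)) (Y t) > 0"
      and v: "v = (\<Sum>t<n. fst (\<omega> t) * ln (dotp 1 (snd (\<omega> t)) (Y t)))" by blast
    have "fst (\<omega> t) * ln (dotp 1 (snd (\<omega> t)) (Y t)) \<le> fst (\<omega> t) * ln (real n * 2)" if t: "t < n" for t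
    proof -
      have "0 < snd (\<omega> t) 0 * Y t 0" using Y(3) t by simp
      then have pos: "Y t 0 > 0" using w(2)[OF t] by (simp add: o1_def)
      have "Y t 0 \<le> (\<Sum>t<n. Y t 0)" by (rule member_le_sum) (use Y(1) t in auto)
      also have "\<dots> \<le> real n * 2" using Y(2) by simp
      finally have "ln (Y t 0) \<le> ln (real n * 2)" using pos by simp
      then show ?thesis using w[OF t] by (simp add: o1_def mult_left_mono)
    qed
    then have "v \<le> (\<Sum>t<n. fst (\<omega> t) * ln (real n * 2))" unfolding v by (rule sum_mono) simp
    then show "v \<le> (\<Sum>t<n. fst (\<omega> t) * ln (real n * 2))" .
  qed
  show ?thesis unfolding offline_opt_def by (rule cSup_upper[OF mem bdd])
qed



lemma arith_A:
  fixes s :: real assumes s: "s \<ge> 18"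
  shows "2 * (s * s) - (4 * ((s * s) * (s * s)) + s * s) / (2 * (s * s) + s/18) \<ge> s / 54"
proof -
  define q where "q = 2 * (s * s) + s/18"
  have q: "q > 0" using s by (simp add: q_def add_pos_pos)
  have "(2 * (s * s) - s/54) * q - (4 * ((s * s) * (s * s)) + s * s) = (s * s) * ((2/27) * s - 973/972)"
    by (simp add: q_def algebra_simps)
  moreover have "(s * s) * ((2/27) * s - 973/972) \<ge> 0" using s by (intro mult_nonneg_nonneg) auto
  ultimately have "(4 * ((s * s) * (s * s)) + s * s) \<le> (2 * (s * s) - s/54) * q" by linarith
  then have "(4 * ((s * s) * (s * s)) + s * s) / q \<le> 2 * (s * s) - s/54" using q by (simp add: divide_le_eq)
  then show ?thesis unfolding q_def by linarith
qed

lemma main_bound: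
  assumes vr: "valid_response 1 sel" and adm: "admissible_price 1 D0 p" and n: "n \<ge> 324"
  shows "max (regret 1 (\<lambda>_. 2) D0 n sel p) (violation 1 (\<lambda>_. 2) D0 n sel p) \<ge> sqrt (real n) / 54"
proof -
  define P where "P = p 0"
  have P: "P > 0" using adm_pos[OF adm] by (simp add: P_def)
  define s where "s = sqrt (real n)"
  have s18: "s \<ge> 18" unfolding s_def using n by (simp add: real_le_rsqrt)
  have n1: "n \<ge> 1" using n by simp
  have npos: "real n > 0" using n by simp
  have nss: "real n = s * s" by (simp add: s_def)
  define q where "q = 2 * real n + s / 18"
  define pc where "pc = q / (2 * real n)"
  have qpos: "q > 0" using npos s18 by (simp add: q_def)
  have pc1: "pc \<ge> 1" using npos s18 by (simp add: pc_def q_def field_simps)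
  have pc2: "pc \<le> 2" using npos s18 n unfolding pc_def q_def nss
    by (simp add: field_simps)
  have npc: "2 * real n * pc = q" using npos by (simp add: pc_def)
  note sd = set_arr
  have cons: "consumed sel p \<omega> t 0 = fst (\<omega> t) / P" if "\<omega> \<in> set_pmf (arrivals n D0)" "t < n" for \<omega> t
  proof -
    have "\<omega> t \<in> SD" using sd that by blast
    then have "snd (\<omega> t) = o1" "fst (\<omega> t) > 0" by (auto simp: SD_def)
    then show ?thesis using resp[where sel=sel and p=p, OF vr P[unfolded P_def]] by (simp add: consumed_def P_def)
  qed
  have sdw: "fst (\<omega> t) \<ge> 1 \<and> snd (\<omega> t) = o1" if "\<omega> \<in> set_pmf (arrivals n D0)" "t < n" for \<omega> t
    using sd[OF that] by (auto simp: SD_def)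
  have Spos: "Ssum n \<omega> > 0" if "\<omega> \<in> set_pmf (arrivals n D0)" for \<omega>
    using Spos[of n \<omega>] sd[OF that] n1 npos by fastforce
  have reg_pt: "offline_opt 1 (\<lambda>j. real n * 2) n \<omega> - online_obj 1 n sel p \<omega> \<ge>
      Ssum n \<omega> * ln (2 * real n * P / Ssum n \<omega>)" if om: "\<omega> \<in> set_pmf (arrivals n D0)" for \<omega>
  proof -
    let ?S = "Ssum n \<omega>"
    have S: "?S > 0" using Spos[OF om] .
    have on: "online_obj 1 n sel p \<omega> = (\<Sum>t<n. fst (\<omega> t) * ln (fst (\<omega> t) / P))"
      unfolding online_obj_def by (rule sum.cong) (use cons[OF om] sdw[OF om] in \<open>auto simp: o1_def\<close>)
    have "(\<Sum>t<n. fst (\<omega> t) * ln (2 * real n * fst (\<omega> t) / ?S)) - (\<Sum>t<n. fst (\<omega> t) * ln (fst (\<omega> t) / P))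
       = (\<Sum>t<n. fst (\<omega> t) * ln (2 * real n * P / ?S))"
      unfolding sum_subtractf[symmetric]
    proof (rule sum.cong)
      fix t assume "t \<in> {..<n}"
      then have w: "fst (\<omega> t) > 0" using sdw[OF om] by (meson less_le_trans lessThan_iff zero_less_one)
      have eq: "2 * real n * fst (\<omega> t) / ?S = (fst (\<omega> t) / P) * (2 * real n * P / ?S)" using P by simp
      have "ln (2 * real n * fst (\<omega> t) / ?S) = ln (fst (\<omega> t) / P) + ln (2 * real n * P / ?S)"
        unfolding eq by (rule ln_mult_pos) (use w P S npos in simp)+
      then show "fst (\<omega> t) * ln (2 * real n * fst (\<omega> t) / ?S) - fst (\<omega> t) * ln (fst (\<omega> t) / P) =
          fst (\<omega> t) * ln (2 * real n * P / ?S)" by (simp add: algebra_simps)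
    qed simp
    also have "\<dots> = ?S * ln (2 * real n * P / ?S)" by (simp add: Ssum_def sum_distrib_right)
    finally show ?thesis using offline_lb[OF _ n1, of \<omega>] sd[OF om] on by fastforce
  qed
  show ?thesis
  proof (cases "P \<ge> pc")
    case True
    have pt: "offline_opt 1 (\<lambda>j. real n * 2) n \<omega> - online_obj 1 n sel p \<omega> \<ge>
       1 * Ssum n \<omega> + (- 1 / q) * (Ssum n \<omega>)^2 + 0" if om: "\<omega> \<in> set_pmf (arrivals n D0)" for \<omega>
    proof -
      let ?S = "Ssum n \<omega>"
      have S: "?S > 0" using Spos[OF om] .
      have "q \<le> 2 * real n * P" using True npc npos by (metis mult_left_mono less_eq_real_def mult_pos_pos zero_less_numeral)
      then have le: "q / ?S \<le> 2 * real n * P / ?S" using S by (simp add: divide_right_mono)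
      have "q / ?S > 0" using S qpos by simp
      then have "ln (q / ?S) \<le> ln (2 * real n * P / ?S)" using le by (subst ln_le_cancel_iff) auto
      moreover have "ln (?S / q) \<le> ?S / q - 1" using S qpos by (intro ln_le_minus_one) simp
      moreover have "ln (q / ?S) = - ln (?S / q)" using S qpos by (simp add: ln_div)
      ultimately have "1 - ?S / q \<le> ln (2 * real n * P / ?S)" by linarith
      then have "?S * (1 - ?S / q) \<le> ?S * ln (2 * real n * P / ?S)" using S by (simp add: mult_left_mono)
      moreover have "?S * (1 - ?S / q) = 1 * ?S + (- 1 / q) * ?S^2 + 0" by (simp add: algebra_simps power2_eq_square)
      ultimately show ?thesis using reg_pt[OF om] by linarith
    qed
    have "regret 1 (\<lambda>_. 2) D0 n sel p \<ge> measure_pmf.expectation (arrivals n D0)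
        (\<lambda>\<omega>. 1 * Ssum n \<omega> + (- 1 / q) * (Ssum n \<omega>)^2 + 0)"
      unfolding regret_def by (rule E_mono[OF fin_arr]) (use pt in simp)
    moreover have "measure_pmf.expectation (arrivals n D0)
        (\<lambda>\<omega>. 1 * Ssum n \<omega> + (- 1 / q) * (Ssum n \<omega>)^2 + 0) = 2 * real n - (4 * real n ^ 2 + real n) / q"
      by (subst E_lin[OF fin_arr]) (simp add: M2 diff_divide_distrib M1)
    moreover have "2 * real n - (4 * real n ^ 2 + real n) / q \<ge> s / 54"
      using arith_A[OF s18] unfolding q_def nss by (simp add: power2_eq_square)
    moreover have "regret 1 (\<lambda>_. 2) D0 n sel p \<le> max (regret 1 (\<lambda>_. 2) D0 n sel p) (violation 1 (\<lambda>_. 2) D0 n sel p)" by simp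
    ultimately show ?thesis unfolding s_def by linarith
  next
    case False
    have pt: "sqrt (\<Sum>j<1. (max 0 ((\<Sum>t<n. consumed sel p \<omega> t j) - real n * 2))\<^sup>2) \<ge>
        (1 / pc) * max (Zv n \<omega>) 0 + 0 * Zv n \<omega> + (- (s / 18) / pc)"
      if om: "\<omega> \<in> set_pmf (arrivals n D0)" for \<omega>
    proof -
      let ?S = "Ssum n \<omega>"
      have S: "?S > 0" using Spos[OF om] .
      have "(\<Sum>t<n. consumed sel p \<omega> t 0) = (\<Sum>t<n. fst (\<omega> t) / P)"
        by (rule sum.cong) (use cons[OF om] in auto)
      then have sumc: "(\<Sum>t<n. consumed sel p \<omega> t 0) = ?S / P" by (simp add: Ssum_def sum_divide_distrib)
      have lhs: "sqrt (\<Sum>j<1. (max 0 ((\<Sum>t<n. consumed sel p \<omega> t j) - real n * 2))\<^sup>2) = max 0 (?S / P - real n * 2)"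
        by (simp add: sumc)
      have "?S / pc \<le> ?S / P" using False P S by (simp add: frac_le less_imp_le)
      moreover have "(1 / pc) * max (Zv n \<omega>) 0 + 0 * Zv n \<omega> + (- (s / 18) / pc) \<le> max 0 (?S / pc - real n * 2)"
      proof (cases "Zv n \<omega> \<ge> 0")
        case True
        have "(1 / pc) * (?S - 2 * real n) - (s / 18) / pc = (?S - q) / pc" using pc1 by (simp add: q_def field_simps)
        also have "\<dots> = ?S / pc - real n * 2" using pc1 npc by (simp add: field_simps)
        finally show ?thesis using True by (simp add: Zv_def)
      next
        case False
        have "s / (18 * pc) \<ge> 0" using pc1 s18 by simp
        then show ?thesis using False by (simp add: max_def)
      qed
      ultimately show ?thesis unfolding lhs by linarith
    qed
    have "violation 1 (\<lambda>_. 2) D0 n sel p \<ge> measure_pmf.expectation (arrivals n D0)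
        (\<lambda>\<omega>. (1 / pc) * max (Zv n \<omega>) 0 + 0 * Zv n \<omega> + (- (s / 18) / pc))"
      unfolding violation_def by (rule E_mono[OF fin_arr]) (use pt in simp)
    moreover have "measure_pmf.expectation (arrivals n D0)
        (\<lambda>\<omega>. (1 / pc) * max (Zv n \<omega>) 0 + 0 * Zv n \<omega> + (- (s / 18) / pc)) =
        (1 / pc) * measure_pmf.expectation (arrivals n D0) (\<lambda>\<omega>. max (Zv n \<omega>) 0) - (s / 18) / pc"
      by (subst E_lin[OF fin_arr]) simp
    moreover have "(1 / pc) * measure_pmf.expectation (arrivals n D0) (\<lambda>\<omega>. max (Zv n \<omega>) 0) \<ge> (1 / pc) * (s / 9)"
      using Epos[OF n1] pc1 by (intro mult_left_mono) (auto simp: s_def)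
    moreover have "(1 / pc) * (s / 9) - (s / 18) / pc = s / (18 * pc)" by (simp add: field_simps)
    moreover have "s / (18 * pc) \<ge> s / 36" using pc1 pc2 s18 by (intro divide_left_mono) auto
    moreover have "s / 54 \<le> s / 36" using s18 by simp
    moreover have "violation 1 (\<lambda>_. 2) D0 n sel p \<le> max (regret 1 (\<lambda>_. 2) D0 n sel p) (violation 1 (\<lambda>_. 2) D0 n sel p)" by simp
    ultimately show ?thesis unfolding s_def by linarith
  qed
qed

theorem theorem1:
  shows "\<exists>(m::nat) (d::nat \<Rightarrow> real) (D::(real \<times> (nat \<Rightarrow> real)) pmf).
    valid_instance m d D \<and>
    (\<forall>sel. valid_response m sel \<longrightarrow>
      (\<forall>P :: nat \<Rightarrow> nat \<Rightarrow> real. (\<forall>n. admissible_price m D (P n)) \<longrightarrow>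
         (\<lambda>n. max (regret m d D n sel (P n)) (violation m d D n sel (P n)))
           \<in> \<Omega>(\<lambda>n. sqrt (real n))))"
proof (intro exI conjI allI impI)
  show "valid_instance 1 (\<lambda>_. 2) D0" by (rule valid0)
next
  fix sel and P :: "nat \<Rightarrow> nat \<Rightarrow> real"
  assume vr: "valid_response 1 sel" and adm: "\<forall>n. admissible_price 1 D0 (P n)"
  show "(\<lambda>n. max (regret 1 (\<lambda>_. 2) D0 n sel (P n)) (violation 1 (\<lambda>_. 2) D0 n sel (P n)))
           \<in> \<Omega>(\<lambda>n. sqrt (real n))"
  proof (rule landau_omega.bigI[of "1/54"])
    show "eventually (\<lambda>n. norm (max (regret 1 (\<lambda>_. 2) D0 n sel (P n)) (violation 1 (\<lambda>_. 2) D0 n sel (P n)))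
       \<ge> 1/54 * norm (sqrt (real n))) at_top"
      unfolding eventually_at_top_linorder
    proof (intro exI allI impI)
      fix n :: nat assume n: "n \<ge> 324"
      have b: "max (regret 1 (\<lambda>_. 2) D0 n sel (P n)) (violation 1 (\<lambda>_. 2) D0 n sel (P n)) \<ge> sqrt (real n) / 54"
        using main_bound[OF vr adm[rule_format] n] .
      moreover have "sqrt (real n) / 54 \<ge> 0" by simp
      ultimately show "norm (max (regret 1 (\<lambda>_. 2) D0 n sel (P n)) (violation 1 (\<lambda>_. 2) D0 n sel (P n)))
       \<ge> 1/54 * norm (sqrt (real n))" by simp
    qed
  qed simp
qed

end
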